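(* Let $\{X_s,\|\cdot\|_s\}_{s\in\mathbb N_0}$ be a sequence of Banach spaces satisfying (F1)–(F3) and $\{g_i\}_{i=1}^\infty\in(X_0^* )^{\mathbb N}$. Assume there is a sequence $\{f_i\}_{i=1}^\infty$ of nonzero elements of $X_F$ such that for every $s\in\mathbb N_0$ and every $f\in X_s$, $f=\sum_{i=1}^\infty g_i(f)f_i$ with convergence in $X_s$. Then there exists a sequence $\{\Theta_s\}_{s\in\mathbb N_0}$ of $CB$-spaces satisfying (F1)–(F3) such that $\{g_i|_{X_F}\}_{i=1}^\infty$ is an $F$-frame for $X_F$ with respect to $\Theta_F$, and $\{f_i\}$ is a $DF$-Bessel sequence for $X_F^*$ with respect to $\Theta_F^*$.
   Context: Conditions (F1)–(F3) for a sequence $\{Y_s,|\cdot|_s\}_{s\in\mathbb N_0}$ of separable Banach spaces: (F1) $\{0\}\neq\bigcap_sY_s\subseteq\dots\subseteq Y_1\subseteq Y_0$; (F2) $|\cdot|_0\le|\cdot|_1\le\dots$; (F3) $Y_F:=\bigcap_sY_s$ dense in each $Y_s$. $X_F=\bigcap_sX_s$, $\Theta_F=\bigcap_s\Theta_s$. $BK$-space: Banach sequence space with continuous coordinate functionals; $CB$-space: $BK$-space in which the canonical vectors $e_i$ form a Schauder basis. For a $CB$-space $\Theta$, $\Theta^*$ is identified with $\{\{g(e_i)\}:g\in\Theta^*\}$ normed by $\|g\|_{\Theta^*}$. For a Banach space $X$ and $BK$-space $\Theta$, $\{h_i\}\subset X^*$ is a $\Theta$-Bessel sequence for $X$ if $\{h_i(f)\}\in\Theta$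 and $|||\{h_i(f)\}|||\le B\|f\|$ for all $f\in X$ (applied to $\{f_i\}\subset X\subseteq X^{**}$ acting on $X^*$). $F$-frame for $X_F$ w.r.t. $\Theta_F$: $\{g_i\}\in(X_F^* )^{\mathbb N}$ with $\{g_i(f)\}\in\Theta_F$ for $f\in X_F$, constants $0<A_s\le B_s$ with $A_s\|f\|_s\le|||\{g_i(f)\}|||_s\le B_s\|f\|_s$ for all $s$ and $f\in X_F$, and an operator $V:\Theta_F\to X_F$ with $V(\{g_i(f)\})=f$ which is $F$-bounded ($\|Vc\|_s\le K_s|||c|||_s$ for each $s$). $\{f_i\}\in(X_F)^{\mathbb N}$ is a $DF$-Bessel sequence for $X_F^*$ w.r.t. $\Theta_F^*$ if it is a $\Theta_s^*$-Bessel sequence for $X_s^*$ for every $s$. *)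

theory Defs
  imports "HOL-Analysis.Analysis"
begin

text \<open>Real scalars. A Banach space is modelled as a subspace X of an ambient real
vector space together with its own norm N (only its values on X matter).\<close>

definition is_norm_on :: "'a::real_vector set \<Rightarrow> ('a \<Rightarrow> real) \<Rightarrow> bool" where
  "is_norm_on X N \<longleftrightarrow> subspace X \<and>
     (\<forall>x\<in>X. N x \<ge> 0 \<and> (N x = 0 \<longleftrightarrow> x = 0)) \<and>
     (\<forall>x\<in>X. \<forall>c. N (c *\<^sub>R x) = \<bar>c\<bar> * N x) \<and>
     (\<forall>x\<in>X. \<forall>y\<in>X. N (x + y) \<le> N x + N y)"

definition banach_on :: "'a::real_vector set \<Rightarrow> ('a \<Rightarrow> real) \<Rightarrow> bool" where
  "banach_on X N \<longleftrightarrow> is_norm_on X N \<and>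
     (\<forall>u. (\<forall>n. u n \<in> X) \<and> (\<forall>e>0. \<exists>M. \<forall>m\<ge>M. \<forall>n\<ge>M. N (u m - u n) < e)
        \<longrightarrow> (\<exists>x\<in>X. (\<lambda>n. N (u n - x)) \<longlonglongrightarrow> 0))"

definition bdd_lin_fun :: "'a::real_vector set \<Rightarrow> ('a \<Rightarrow> real) \<Rightarrow> ('a \<Rightarrow> real) \<Rightarrow> bool" where
  "bdd_lin_fun X N h \<longleftrightarrow>
     (\<forall>x\<in>X. \<forall>y\<in>X. h (x + y) = h x + h y) \<and> (\<forall>x\<in>X. \<forall>c. h (c *\<^sub>R x) = c * h x) \<and>
     (\<exists>C. \<forall>x\<in>X. \<bar>h x\<bar> \<le> C * N x)"

definition dual_norm :: "'a set \<Rightarrow> ('a \<Rightarrow> real) \<Rightarrow> ('a \<Rightarrow> real) \<Rightarrow> real" where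
  "dual_norm X N h = (SUP x\<in>{x\<in>X. N x \<le> 1}. \<bar>h x\<bar>)"

definition F_seq :: "(nat \<Rightarrow> 'a::real_vector set) \<Rightarrow> (nat \<Rightarrow> 'a \<Rightarrow> real) \<Rightarrow> bool" where
  "F_seq X N \<longleftrightarrow>
     (\<forall>s. banach_on (X s) (N s)) \<and>
     (\<Inter>s. X s) \<noteq> {0} \<and> (\<forall>s. X (Suc s) \<subseteq> X s) \<and>
     (\<forall>s. \<forall>x\<in>X (Suc s). N s x \<le> N (Suc s) x) \<and>
     (\<forall>s. \<forall>x\<in>X s. \<forall>e>0. \<exists>y\<in>(\<Inter>t. X t). N s (x - y) < e)"

definition bdd_lin_seq_fun :: "(nat \<Rightarrow> real) set \<Rightarrow> ((nat \<Rightarrow> real) \<Rightarrow> real) \<Rightarrow> ((nat \<Rightarrow> real) \<Rightarrow> real) \<Rightarrow> bool" where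
  "bdd_lin_seq_fun \<Theta> T \<phi> \<longleftrightarrow>
     (\<forall>c\<in>\<Theta>. \<forall>d\<in>\<Theta>. \<phi> (\<lambda>j. c j + d j) = \<phi> c + \<phi> d) \<and> (\<forall>c\<in>\<Theta>. \<forall>a. \<phi> (\<lambda>j. a * c j) = a * \<phi> c) \<and>
     (\<exists>C. \<forall>c\<in>\<Theta>. \<bar>\<phi> c\<bar> \<le> C * T c)"

definition unit_seq :: "nat \<Rightarrow> nat \<Rightarrow> real" where
  "unit_seq i = (\<lambda>j. if j = i then 1 else 0)"

definition seq_subspace :: "(nat \<Rightarrow> real) set \<Rightarrow> bool" where
  "seq_subspace \<Theta> \<longleftrightarrow> (\<lambda>j. 0) \<in> \<Theta> \<and>
     (\<forall>c\<in>\<Theta>. \<forall>d\<in>\<Theta>. (\<lambda>j. c j + d j) \<in> \<Theta>) \<and> (\<forall>c\<in>\<Theta>. \<forall>a. (\<lambda>j. a * c j) \<in> \<Theta>)"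

definition seq_norm_on :: "(nat \<Rightarrow> real) set \<Rightarrow> ((nat \<Rightarrow> real) \<Rightarrow> real) \<Rightarrow> bool" where
  "seq_norm_on \<Theta> T \<longleftrightarrow> seq_subspace \<Theta> \<and>
     (\<forall>c\<in>\<Theta>. T c \<ge> 0 \<and> (T c = 0 \<longleftrightarrow> c = (\<lambda>j. 0))) \<and>
     (\<forall>c\<in>\<Theta>. \<forall>a. T (\<lambda>j. a * c j) = \<bar>a\<bar> * T c) \<and>
     (\<forall>c\<in>\<Theta>. \<forall>d\<in>\<Theta>. T (\<lambda>j. c j + d j) \<le> T c + T d)"

definition BK_space :: "(nat \<Rightarrow> real) set \<Rightarrow> ((nat \<Rightarrow> real) \<Rightarrow> real) \<Rightarrow> bool" where
  "BK_space \<Theta> T \<longleftrightarrow> seq_norm_on \<Theta> T \<and>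
     (\<forall>u. (\<forall>n. u n \<in> \<Theta>) \<and> (\<forall>e>0. \<exists>M. \<forall>m\<ge>M. \<forall>n\<ge>M. T (\<lambda>j. u m j - u n j) < e)
        \<longrightarrow> (\<exists>c\<in>\<Theta>. (\<lambda>n. T (\<lambda>j. u n j - c j)) \<longlonglongrightarrow> 0)) \<and>
     (\<forall>i. \<exists>C. \<forall>c\<in>\<Theta>. \<bar>c i\<bar> \<le> C * T c)"

definition CB_space :: "(nat \<Rightarrow> real) set \<Rightarrow> ((nat \<Rightarrow> real) \<Rightarrow> real) \<Rightarrow> bool" where
  "CB_space \<Theta> T \<longleftrightarrow> BK_space \<Theta> T \<and> (\<forall>i. unit_seq i \<in> \<Theta>) \<and>
     (\<forall>c\<in>\<Theta>. \<exists>!a. (\<lambda>n. T (\<lambda>j. c j - (\<Sum>i<n. a i * unit_seq i j))) \<longlonglongrightarrow> 0)"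

text \<open>g is an F-frame for X_F = \<Inter>X s w.r.t. \<Theta>_F = \<Inter>\<Theta> s (only the values of g on X_F,
i.e. the restrictions, are used).\<close>
definition F_frame ::
  "(nat \<Rightarrow> 'a::real_vector set) \<Rightarrow> (nat \<Rightarrow> 'a \<Rightarrow> real) \<Rightarrow>
   (nat \<Rightarrow> (nat \<Rightarrow> real) set) \<Rightarrow> (nat \<Rightarrow> (nat \<Rightarrow> real) \<Rightarrow> real) \<Rightarrow> (nat \<Rightarrow> 'a \<Rightarrow> real) \<Rightarrow> bool" where
  "F_frame X N \<Theta> T g \<longleftrightarrow>
     (\<forall>i. (\<forall>x\<in>(\<Inter>s. X s). \<forall>y\<in>(\<Inter>s. X s). g i (x + y) = g i x + g i y) \<and>
          (\<forall>x\<in>(\<Inter>s. X s). \<forall>c. g i (c *\<^sub>R x) = c * g i x) \<and>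
          (\<exists>s C. \<forall>x\<in>(\<Inter>s. X s). \<bar>g i x\<bar> \<le> C * N s x)) \<and>
     (\<forall>f\<in>(\<Inter>s. X s). (\<lambda>i. g i f) \<in> (\<Inter>s. \<Theta> s)) \<and>
     (\<exists>A B. \<forall>s. 0 < A s \<and> A s \<le> B s \<and>
        (\<forall>f\<in>(\<Inter>s. X s). A s * N s f \<le> T s (\<lambda>i. g i f) \<and> T s (\<lambda>i. g i f) \<le> B s * N s f)) \<and>
     (\<exists>V. (\<forall>c\<in>(\<Inter>s. \<Theta> s). V c \<in> (\<Inter>s. X s)) \<and>
        (\<forall>c\<in>(\<Inter>s. \<Theta> s). \<forall>d\<in>(\<Inter>s. \<Theta> s). V (\<lambda>j. c j + d j) = V c + V d) \<and>
        (\<forall>c\<in>(\<Inter>s. \<Theta> s). \<forall>a. V (\<lambda>j. a * c j) = a *\<^sub>R V c) \<and>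
        (\<forall>f\<in>(\<Inter>s. X s). V (\<lambda>i. g i f) = f) \<and>
        (\<forall>s. \<exists>K. \<forall>c\<in>(\<Inter>s. \<Theta> s). N s (V c) \<le> K * T s c))"

text \<open>{f_i} is a \<Theta>^*-Bessel sequence for X^*, with \<Theta>^* identified with the sequences
(\<phi>(e_i)) for \<phi> \<in> \<Theta>^*, normed by the dual norm of \<phi>.\<close>
definition dual_Bessel ::
  "'a::real_vector set \<Rightarrow> ('a \<Rightarrow> real) \<Rightarrow> (nat \<Rightarrow> real) set \<Rightarrow> ((nat \<Rightarrow> real) \<Rightarrow> real) \<Rightarrow>
   (nat \<Rightarrow> 'a) \<Rightarrow> bool" where
  "dual_Bessel X N \<Theta> T f \<longleftrightarrow>
     (\<exists>B. \<forall>h. bdd_lin_fun X N h \<longrightarrow>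
        (\<exists>\<phi>. bdd_lin_seq_fun \<Theta> T \<phi> \<and> (\<forall>i. \<phi> (unit_seq i) = h (f i)) \<and>
             dual_norm \<Theta> T \<phi> \<le> B * dual_norm X N h))"

definition DF_Bessel ::
  "(nat \<Rightarrow> 'a::real_vector set) \<Rightarrow> (nat \<Rightarrow> 'a \<Rightarrow> real) \<Rightarrow>
   (nat \<Rightarrow> (nat \<Rightarrow> real) set) \<Rightarrow> (nat \<Rightarrow> (nat \<Rightarrow> real) \<Rightarrow> real) \<Rightarrow> (nat \<Rightarrow> 'a) \<Rightarrow> bool" where
  "DF_Bessel X N \<Theta> T f \<longleftrightarrow> (\<forall>i. f i \<in> (\<Inter>s. X s)) \<and> (\<forall>s. dual_Bessel (X s) (N s) (\<Theta> s) (T s) f)"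

end

theory Submission
  imports Defs
begin


lemma le_lim:
  fixes a b :: real
  assumes "\<And>n. n \<ge> M \<Longrightarrow> a \<le> b + d n" "d \<longlonglongrightarrow> 0"
  shows "a \<le> b"
proof -
  have "(\<lambda>n. b + d n) \<longlonglongrightarrow> b + 0" by (intro tendsto_intros assms)
  then have "(\<lambda>n. b + d n) \<longlonglongrightarrow> b" by simp
  moreover have "(\<lambda>n. a) \<longlonglongrightarrow> a" by simp
  ultimately show ?thesis using assms(1) by (intro LIMSEQ_le[of "\<lambda>n. a" a "\<lambda>n. b + d n" b]) auto
qed

context
  fixes X :: "'a::real_vector set" and N :: "'a \<Rightarrow> real"
  assumes nrm: "is_norm_on X N"
begin

lemma sub: "subspace X" using nrm unfolding is_norm_on_def by auto
lemma X0: "0 \<in> X" using sub by (rule subspace_0)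
lemma Xadd: "x \<in> X \<Longrightarrow> y \<in> X \<Longrightarrow> x + y \<in> X" using sub by (rule subspace_add)
lemma Xdiff: "x \<in> X \<Longrightarrow> y \<in> X \<Longrightarrow> x - y \<in> X" using sub by (rule subspace_diff)
lemma Xscale: "x \<in> X \<Longrightarrow> c *\<^sub>R x \<in> X" using sub by (simp add: subspace_scale)
lemma Xsum: "(\<And>i. i \<in> I \<Longrightarrow> v i \<in> X) \<Longrightarrow> sum v I \<in> X" using sub by (simp add: subspace_sum)

lemma Nnn: "x \<in> X \<Longrightarrow> 0 \<le> N x" using nrm unfolding is_norm_on_def by auto
lemma Nz: "x \<in> X \<Longrightarrow> N x = 0 \<longleftrightarrow> x = 0" using nrm unfolding is_norm_on_def by auto
lemma N0: "N 0 = 0" using Nz[OF X0] by simp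
lemma Nscale: "x \<in> X \<Longrightarrow> N (c *\<^sub>R x) = \<bar>c\<bar> * N x" using nrm unfolding is_norm_on_def by auto
lemma Ntri: "x \<in> X \<Longrightarrow> y \<in> X \<Longrightarrow> N (x + y) \<le> N x + N y" using nrm unfolding is_norm_on_def by auto
lemma Nneg: "x \<in> X \<Longrightarrow> N (- x) = N x" using Nscale[of x "-1"] by simp
lemma Ncomm: "x \<in> X \<Longrightarrow> y \<in> X \<Longrightarrow> N (x - y) = N (y - x)"
  using Nneg[of "y - x"] Xdiff by simp
lemma Ntri_diff: "x \<in> X \<Longrightarrow> y \<in> X \<Longrightarrow> z \<in> X \<Longrightarrow> N (x - z) \<le> N (x - y) + N (y - z)"
  using Ntri[of "x - y" "y - z"] Xdiff by simp
lemma Ntri_minus: "x \<in> X \<Longrightarrow> y \<in> X \<Longrightarrow> N (x - y) \<le> N x + N y"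
  using Ntri[of x "- y"] Nneg[of y] sub by (simp add: subspace_neg)
lemma Nrev: "x \<in> X \<Longrightarrow> y \<in> X \<Longrightarrow> N x \<le> N y + N (x - y)"
  using Ntri[of y "x - y"] Xdiff by simp
lemma Nsum: "finite I \<Longrightarrow> (\<And>i. i \<in> I \<Longrightarrow> v i \<in> X) \<Longrightarrow> N (sum v I) \<le> (\<Sum>i\<in>I. N (v i))"
proof (induction I rule: finite_induct)
  case empty then show ?case by (simp add: N0)
next
  case (insert a I)
  have "N (sum v (insert a I)) = N (v a + sum v I)" using insert by simp
  also have "\<dots> \<le> N (v a) + N (sum v I)" using insert by (intro Ntri Xsum) auto
  also have "\<dots> \<le> N (v a) + (\<Sum>i\<in>I. N (v i))" using insert by auto
  finally show ?case using insert by simp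
qed

lemma lim_unique:
  assumes "x \<in> X" "y \<in> X" "\<And>n. u n \<in> X"
    "(\<lambda>n. N (u n - x)) \<longlonglongrightarrow> 0" "(\<lambda>n. N (u n - y)) \<longlonglongrightarrow> 0"
  shows "x = y"
proof -
  have "N (x - y) \<le> 0 + 0"
  proof (rule le_lim[where M=0])
    show "(\<lambda>n. N (u n - x) + N (u n - y)) \<longlonglongrightarrow> 0" using tendsto_add[OF assms(4,5)] by simp
    fix n
    have "N (x - y) \<le> N (x - u n) + N (u n - y)" using assms by (intro Ntri_diff) auto
    then show "N (x - y) \<le> 0 + 0 + (N (u n - x) + N (u n - y))"
      using Ncomm[of "u n" x] assms by simp
  qed
  then have "N (x - y) = 0" using Nnn[of "x - y"] Xdiff assms by simp
  then show ?thesis using Nz[of "x - y"] Xdiff assms by simp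
qed

end


lemma ubp:
  fixes X :: "'a::real_vector set" and N :: "'a \<Rightarrow> real" and p :: "nat \<Rightarrow> 'a \<Rightarrow> real"
  assumes ban: "banach_on X N"
  and semi: "\<And>n x y. x\<in>X \<Longrightarrow> y\<in>X \<Longrightarrow> p n (x + y) \<le> p n x + p n y"
  and hom: "\<And>n x c. x\<in>X \<Longrightarrow> p n (c *\<^sub>R x) = \<bar>c\<bar> * p n x"
  and bnd: "\<And>n. \<exists>L. \<forall>x\<in>X. p n x \<le> L * N x"
  and pw: "\<And>x. x\<in>X \<Longrightarrow> \<exists>B. \<forall>n. p n x \<le> B"
  shows "\<exists>B. \<forall>n. \<forall>x\<in>X. p n x \<le> B * N x"
proof (rule ccontr)
  assume nb: "\<not> ?thesis"
  have nrm: "is_norm_on X N" using ban unfolding banach_on_def by auto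
  note Xl = X0[OF nrm] Xadd[OF nrm] Xdiff[OF nrm] Xscale[OF nrm]
  note Nl = Nnn[OF nrm] Nz[OF nrm] Nscale[OF nrm] Ntri[OF nrm] Nneg[OF nrm] Ncomm[OF nrm]
     Ntri_diff[OF nrm]
  have p0: "p n 0 = 0" for n using hom[of 0 n 0] Xl by simp
  have pneg: "x \<in> X \<Longrightarrow> p n (- x) = p n x" for n x using hom[of x n "-1"] by simp
  have pdiff: "x \<in> X \<Longrightarrow> y \<in> X \<Longrightarrow> p n (x - y) \<le> p n x + p n y" for n x y
    using semi[of x "- y" n] pneg[of y n] Xdiff[OF nrm X0[OF nrm], of y] by simp
  define S where "S = {x\<in>X. N x \<le> 1}"
  define opn where "opn n = (SUP x\<in>S. p n x)" for n
  have Sne: "S \<noteq> {}" unfolding S_def using Xl(1) N0[OF nrm] by auto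
  have bdd: "bdd_above (p n ` S)" for n
  proof -
    obtain L where L: "\<forall>x\<in>X. p n x \<le> L * N x" using bnd by blast
    have "p n x \<le> \<bar>L\<bar>" if "x \<in> S" for x
    proof -
      have "p n x \<le> L * N x" using L that unfolding S_def by auto
      also have "\<dots> \<le> \<bar>L\<bar> * N x" using Nl(1)[of x] that unfolding S_def
        by (intro mult_right_mono) auto
      also have "\<dots> \<le> \<bar>L\<bar> * 1" using that unfolding S_def by (intro mult_left_mono) auto
      finally show ?thesis by simp
    qed
    then show ?thesis by (meson bdd_aboveI2)
  qed
  have opn_nn: "0 \<le> opn n" for n
  proof -
    have "p n 0 \<le> opn n" unfolding opn_def using bdd Xl(1) N0[OF nrm]
      by (intro cSUP_upper) (auto simp: S_def)
    then show ?thesis using p0 by simp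
  qed
  have opn_ge: "p n x \<le> opn n * N x" if x: "x \<in> X" for n x
  proof (cases "x = 0")
    case True then show ?thesis using p0 N0[OF nrm] by simp
  next
    case False
    then have Np: "N x > 0" using Nl(1,2)[OF x] by auto
    define x' where "x' = (1 / N x) *\<^sub>R x"
    have "N x' = 1" unfolding x'_def using Nl(3)[OF x] Np by simp
    then have "x' \<in> S" unfolding S_def x'_def using Xl x by auto
    then have "p n x' \<le> opn n" unfolding opn_def using bdd by (intro cSUP_upper) auto
    moreover have "p n x' = p n x / N x" unfolding x'_def using hom[OF x] Np by simp
    ultimately show ?thesis using Np by (simp add: divide_le_eq mult.commute)
  qed
  have big: "\<exists>n. opn n > B" for B
  proof (rule ccontr)
    assume "\<not> ?thesis"
    then have "opn n \<le> max B 0" for n by (meson le_max_iff_disj not_le)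
    then have "\<forall>n. \<forall>x\<in>X. p n x \<le> max B 0 * N x"
      using opn_ge Nl(1) by (meson mult_right_mono order_trans)
    then show False using nb by blast
  qed
  have sokal: "\<exists>x'\<in>X. N (x' - x) \<le> r \<and> (2/3) * r * opn n \<le> p n x'"
    if x: "x \<in> X" and r: "r > 0" and o: "opn n > 0" for x r n
  proof -
    have "(2/3) * opn n < opn n" using o by simp
    then obtain y where y: "y \<in> S" "(2/3) * opn n < p n y"
      unfolding opn_def using less_cSUP_iff[OF Sne bdd] by blast
    define z where "z = r *\<^sub>R y"
    have yX: "y \<in> X" and Ny: "N y \<le> 1" using y unfolding S_def by auto
    have zX: "z \<in> X" unfolding z_def using Xl yX by auto
    have Nz': "N z \<le> r" unfolding z_def using Nl(3)[OF yX] r Ny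
      by (simp add: mult_left_le)
    have pz: "(2/3) * r * opn n \<le> p n z" unfolding z_def using hom[OF yX] r y(2) by simp
    have "p n (2 *\<^sub>R z) \<le> p n (x + z) + p n (x - z)"
    proof -
      have "2 *\<^sub>R z = (x + z) - (x - z)" by (simp add: scaleR_2)
      then show ?thesis using pdiff[of "x + z" "x - z" n] Xl x zX by metis
    qed
    then have "2 * p n z \<le> p n (x + z) + p n (x - z)" using hom[OF zX, of n 2] by simp
    then have "p n z \<le> p n (x + z) \<or> p n z \<le> p n (x - z)" by linarith
    then show ?thesis
    proof
      assume "p n z \<le> p n (x + z)"
      then show ?thesis using pz Nz' x zX Xl by (intro bexI[of _ "x + z"]) auto
    next
      assume "p n z \<le> p n (x - z)"
      moreover have "N (x - z - x) = N z" using Nl(5)[OF zX] by simp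
      ultimately show ?thesis using pz Nz' x zX Xl by (intro bexI[of _ "x - z"]) auto
    qed
  qed
  define r where "r k = (1/3::real) ^ Suc k" for k
  define nsel where "nsel k = (SOME n. opn n > (4::real) ^ Suc k)" for k
  have nsel: "opn (nsel k) > 4 ^ Suc k" for k unfolding nsel_def using big by (rule someI_ex)
  define step where "step k x = (SOME x'. x' \<in> X \<and> N (x' - x) \<le> r k \<and>
      (2/3) * r k * opn (nsel k) \<le> p (nsel k) x')" for k x
  have step: "step k x \<in> X \<and> N (step k x - x) \<le> r k \<and>
      (2/3) * r k * opn (nsel k) \<le> p (nsel k) (step k x)" if "x \<in> X" for k x
  proof -
    have "(0::real) < 4 ^ Suc k" by simp
    then have "opn (nsel k) > 0" using nsel[of k] by linarith
    then have "\<exists>x'. x' \<in> X \<and> N (x' - x) \<le> r k \<and> (2/3) * r k * opn (nsel k) \<le> p (nsel k) x'"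
      using sokal[OF that, of "r k" "nsel k"] by (auto simp: r_def)
    then show ?thesis unfolding step_def by (rule someI_ex)
  qed
  define xs where "xs = rec_nat 0 step"
  have xs0: "xs 0 = 0" and xsS: "xs (Suc k) = step k (xs k)" for k unfolding xs_def by simp_all
  have xsX: "xs k \<in> X" for k by (induction k) (use Xl(1) step in \<open>auto simp: xs0 xsS\<close>)
  have xsstep: "N (xs (Suc k) - xs k) \<le> r k" "(2/3) * r k * opn (nsel k) \<le> p (nsel k) (xs (Suc k))" for k
    using step[OF xsX[of k]] by (auto simp: xsS)
  have geo: "N (xs m - xs k) \<le> ((1/3)^k - (1/3)^m) / 2" if "k \<le> m" for k m
    using that
  proof (induction m rule: dec_induct)
    case base then show ?case using N0[OF nrm] by simp
  next
    case (step m)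
    have "N (xs (Suc m) - xs k) \<le> N (xs (Suc m) - xs m) + N (xs m - xs k)"
      using xsX by (intro Nl(7))
    also have "\<dots> \<le> r m + ((1/3)^k - (1/3)^m) / 2" using xsstep(1)[of m] step.IH by linarith
    also have "\<dots> = ((1/3)^k - (1/3)^Suc m) / 2" unfolding r_def by (simp add: field_simps)
    finally show ?case .
  qed
  have geo2: "N (xs m - xs k) \<le> (1/3)^k / 2" if "k \<le> m" for k m
  proof -
    have "((1/3::real)^k - (1/3)^m) / 2 \<le> (1/3)^k / 2" by (intro divide_right_mono) auto
    then show ?thesis using geo[OF that] by (rule order_trans[rotated])
  qed
  have cauchy: "\<forall>e>0. \<exists>M. \<forall>m\<ge>M. \<forall>n\<ge>M. N (xs m - xs n) < e"
  proof (intro allI impI)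
    fix e :: real assume "e > 0"
    then obtain M where M: "(1/3::real)^M < e" using real_arch_pow_inv[of e "1/3"] by auto
    show "\<exists>M. \<forall>m\<ge>M. \<forall>n\<ge>M. N (xs m - xs n) < e"
    proof (intro exI allI impI)
      fix m n assume "m \<ge> M" "n \<ge> M"
      have "N (xs m - xs n) \<le> N (xs m - xs M) + N (xs M - xs n)" using xsX by (intro Nl(7))
      also have "\<dots> = N (xs m - xs M) + N (xs n - xs M)" using Nl(6) xsX by metis
      also have "\<dots> \<le> (1/3)^M / 2 + (1/3)^M / 2" using geo2 \<open>m \<ge> M\<close> \<open>n \<ge> M\<close> by (intro add_mono) auto
      finally show "N (xs m - xs n) < e" using M by simp
    qed
  qed
  obtain xl where xl: "xl \<in> X" "(\<lambda>n. N (xs n - xl)) \<longlonglongrightarrow> 0"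
    using ban cauchy xsX unfolding banach_on_def by blast
  have xlclose: "N (xl - xs k) \<le> (1/3)^k / 2" for k
  proof (rule le_lim[where M=k])
    show "(\<lambda>n. N (xs n - xl)) \<longlonglongrightarrow> 0" by (rule xl(2))
    fix m assume "m \<ge> k"
    have "N (xl - xs k) \<le> N (xl - xs m) + N (xs m - xs k)" using xsX xl by (intro Nl(7))
    also have "\<dots> = N (xs m - xl) + N (xs m - xs k)" using Nl(6) xsX xl by metis
    finally show "N (xl - xs k) \<le> (1/3)^k / 2 + N (xs m - xl)" using geo2[OF \<open>m \<ge> k\<close>] by simp
  qed
  obtain B where B: "\<forall>n. p n xl \<le> B" using pw[OF xl(1)] by blast
  have lowb: "(4/3::real) ^ Suc k / 6 \<le> B" for k
  proof -
    let ?n = "nsel k"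
    have "p ?n (xs (Suc k)) \<le> p ?n xl + p ?n (xs (Suc k) - xl)"
      using semi[of xl "xs (Suc k) - xl" ?n] xl xsX Xl by simp
    also have "p ?n (xs (Suc k) - xl) \<le> opn ?n * N (xs (Suc k) - xl)" using opn_ge xl xsX Xl by blast
    also have "N (xs (Suc k) - xl) = N (xl - xs (Suc k))" using Nl(6) xl xsX by metis
    also have "opn ?n * \<dots> \<le> opn ?n * ((1/3)^Suc k / 2)"
      by (intro mult_left_mono xlclose opn_nn)
    finally have "(2/3) * r k * opn ?n \<le> p ?n xl + opn ?n * ((1/3)^Suc k / 2)"
      using xsstep(2)[of k] by linarith
    then have "(1/6) * (1/3)^Suc k * opn ?n \<le> p ?n xl" unfolding r_def by (simp add: algebra_simps)
    moreover have "(1/6) * (1/3)^Suc k * 4 ^ Suc k \<le> (1/6) * (1/3)^Suc k * opn ?n"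
      using nsel[of k] by (intro mult_left_mono) auto
    moreover have "(1/6) * (1/3::real)^Suc k * 4 ^ Suc k = (4/3) ^ Suc k / 6"
      by (simp add: power_divide field_simps)
    ultimately show ?thesis using B[rule_format, of ?n] by linarith
  qed
  obtain n where n: "6 * B < (4/3::real) ^ n" using real_arch_pow[of "4/3" "6*B"] by auto
  have "(4/3::real) ^ n \<le> (4/3) ^ Suc n" by (rule power_increasing) auto
  moreover have "(0::real) < (4/3) ^ n" by simp
  moreover have "(4/3::real)^Suc n = 4/3 * (4/3)^n" by simp
  ultimately show False using lowb[of n] n by linarith
qed



definition PS :: "(nat \<Rightarrow> 'a::real_vector) \<Rightarrow> (nat \<Rightarrow> real) \<Rightarrow> nat \<Rightarrow> 'a" where
  "PS f c n = (\<Sum>i<n. c i *\<^sub>R f i)"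

definition Th :: "(nat \<Rightarrow> 'a::real_vector set) \<Rightarrow> (nat \<Rightarrow> 'a \<Rightarrow> real) \<Rightarrow> (nat \<Rightarrow> 'a) \<Rightarrow> nat \<Rightarrow> (nat \<Rightarrow> real) set" where
  "Th X N f s = {c. \<forall>e>0. \<exists>M. \<forall>m\<ge>M. \<forall>n\<ge>M. N s (PS f c m - PS f c n) < e}"

definition TT :: "(nat \<Rightarrow> 'a::real_vector \<Rightarrow> real) \<Rightarrow> (nat \<Rightarrow> 'a) \<Rightarrow> nat \<Rightarrow> (nat \<Rightarrow> real) \<Rightarrow> real" where
  "TT N f s c = (SUP n. N s (PS f c n))"

lemma PS_add: "PS f (\<lambda>j. c j + d j) n = PS f c n + PS f d n"
  unfolding PS_def by (simp add: scaleR_add_left sum.distrib)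
lemma PS_diff: "PS f (\<lambda>j. c j - d j) n = PS f c n - PS f d n"
  unfolding PS_def by (simp add: scaleR_diff_left sum_subtractf)
lemma PS_scale: "PS f (\<lambda>j. a * c j) n = a *\<^sub>R PS f c n"
  unfolding PS_def by (simp add: scaleR_sum_right)
lemma PS_zero: "PS f (\<lambda>j. 0) n = 0" unfolding PS_def by simp
lemma PS_Suc: "PS f c (Suc n) = PS f c n + c n *\<^sub>R f n" unfolding PS_def by simp
lemma PS_0: "PS f c 0 = 0" unfolding PS_def by simp
lemma PS_fin: assumes "\<And>j. j \<ge> M \<Longrightarrow> c j = 0" "n \<ge> M" shows "PS f c n = PS f c M"
  using assms(2)
proof (induction n rule: dec_induct)
  case (step n) then show ?case by (simp add: PS_Suc assms(1))
qed simp

locale setting =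
  fixes X :: "nat \<Rightarrow> 'a::real_vector set" and N :: "nat \<Rightarrow> 'a \<Rightarrow> real"
    and g :: "nat \<Rightarrow> 'a \<Rightarrow> real" and f :: "nat \<Rightarrow> 'a"
  assumes FS: "F_seq X N"
    and gb: "\<forall>i. bdd_lin_fun (X 0) (N 0) (g i)"
    and fF: "\<forall>i. f i \<in> (\<Inter>s. X s) \<and> f i \<noteq> 0"
    and conv: "\<forall>s. \<forall>x\<in>X s. (\<lambda>n. N s (x - (\<Sum>i<n. g i x *\<^sub>R f i))) \<longlonglongrightarrow> 0"
begin

abbreviation "\<Theta> \<equiv> Th X N f"
abbreviation "T \<equiv> TT N f"
abbreviation "P \<equiv> PS f"

lemma ban: "banach_on (X s) (N s)" using FS unfolding F_seq_def by auto
lemma nrm: "is_norm_on (X s) (N s)" using ban unfolding banach_on_def by auto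

lemma Xsuc: "X (Suc s) \<subseteq> X s" using FS unfolding F_seq_def by auto
lemma Xmono: "s \<le> t \<Longrightarrow> X t \<subseteq> X s"
proof (induction t rule: dec_induct)
  case (step n) then show ?case using Xsuc[of n] by auto
qed simp
lemma Nmono: "s \<le> t \<Longrightarrow> x \<in> X t \<Longrightarrow> N s x \<le> N t x"
proof (induction t rule: dec_induct)
  case (step n)
  have "N n x \<le> N (Suc n) x" using FS step unfolding F_seq_def by auto
  moreover have "x \<in> X n" using step Xsuc by auto
  ultimately show ?case using step by (meson order_trans)
qed simp
lemma XF0: "x \<in> X t \<Longrightarrow> x \<in> X 0" using Xmono[of 0 t] by auto

lemma fX: "f i \<in> X s" using fF by auto
lemma fnz: "N s (f i) > 0"
  using fF Nnn[OF nrm fX, of s i] Nz[OF nrm fX, of s i] by auto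

lemma PSX: "P c n \<in> X s" unfolding PS_def using fX by (intro Xsum[OF nrm] Xscale[OF nrm]) auto

lemma PS_bound: "N s (P c n) \<le> (\<Sum>i<n. \<bar>c i\<bar> * N s (f i))"
  unfolding PS_def using Nsum[OF nrm, of "{..<n}" "\<lambda>i. c i *\<^sub>R f i" s] fX Xscale[OF nrm]
    Nscale[OF nrm fX] by simp

lemma Th_fin: "(\<And>j. j \<ge> M \<Longrightarrow> c j = 0) \<Longrightarrow> c \<in> \<Theta> s"
proof -
  assume H: "\<And>j. j \<ge> M \<Longrightarrow> c j = 0"
  have "N s (P c m - P c n) = 0" if "m \<ge> M" "n \<ge> M" for m n
  proof -
    have "P c m = P c M" "P c n = P c M" using PS_fin[of M c, OF H] that by auto
    then show ?thesis using N0[OF nrm] by simp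
  qed
  then show ?thesis unfolding Th_def by (intro CollectI allI impI exI[of _ M]) auto
qed

lemma Th_cauchy: "c \<in> \<Theta> s \<Longrightarrow> e > 0 \<Longrightarrow> \<exists>M. \<forall>m\<ge>M. \<forall>n\<ge>M. N s (P c m - P c n) < e"
  unfolding Th_def by auto

lemma Th_bdd: assumes "c \<in> \<Theta> s" shows "bdd_above (range (\<lambda>n. N s (P c n)))"
proof -
  obtain M where M: "\<forall>m\<ge>M. \<forall>n\<ge>M. N s (P c m - P c n) < 1" using Th_cauchy[OF assms] by force
  let ?K = "(\<Sum>i<M. \<bar>c i\<bar> * N s (f i)) + 1"
  have "N s (P c n) \<le> ?K" for n
  proof (cases "n \<ge> M")
    case True
    have "N s (P c n) \<le> N s (P c M) + N s (P c n - P c M)" using PSX by (intro Nrev[OF nrm])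
    also have "\<dots> \<le> (\<Sum>i<M. \<bar>c i\<bar> * N s (f i)) + 1"
      using PS_bound[of s c M] less_imp_le[OF M[rule_format, OF True order_refl]] by (intro add_mono) auto
    finally show ?thesis .
  next
    case False
    have "N s (P c n) \<le> (\<Sum>i<n. \<bar>c i\<bar> * N s (f i))" by (rule PS_bound)
    also have "\<dots> \<le> (\<Sum>i<M. \<bar>c i\<bar> * N s (f i))"
      using False Nnn[OF nrm fX] by (intro sum_mono2) auto
    finally show ?thesis by simp
  qed
  then show ?thesis by (meson bdd_aboveI2)
qed

lemma T_upper: "c \<in> \<Theta> s \<Longrightarrow> N s (P c n) \<le> T s c"
  unfolding TT_def using Th_bdd by (intro cSUP_upper) auto
lemma T_least: "(\<And>n. N s (P c n) \<le> b) \<Longrightarrow> T s c \<le> b"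
  unfolding TT_def by (intro cSUP_least) auto
lemma T_nn: "c \<in> \<Theta> s \<Longrightarrow> 0 \<le> T s c"
  using T_upper[of c s 0] N0[OF nrm] by (simp add: PS_0)

lemma Th_add: assumes "c \<in> \<Theta> s" "d \<in> \<Theta> s" shows "(\<lambda>j. c j + d j) \<in> \<Theta> s"
  unfolding Th_def
proof (intro CollectI allI impI)
  fix e :: real assume e: "e > 0"
  obtain M1 where M1: "\<forall>m\<ge>M1. \<forall>n\<ge>M1. N s (P c m - P c n) < e/2" using Th_cauchy[OF assms(1), of "e/2"] e by auto
  obtain M2 where M2: "\<forall>m\<ge>M2. \<forall>n\<ge>M2. N s (P d m - P d n) < e/2" using Th_cauchy[OF assms(2), of "e/2"] e by auto
  show "\<exists>M. \<forall>m\<ge>M. \<forall>n\<ge>M. N s (P (\<lambda>j. c j + d j) m - P (\<lambda>j. c j + d j) n) < e"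
  proof (intro exI allI impI)
    fix m n assume "max M1 M2 \<le> m" "max M1 M2 \<le> n"
    have "P (\<lambda>j. c j + d j) m - P (\<lambda>j. c j + d j) n = (P c m - P c n) + (P d m - P d n)"
      by (simp add: PS_add)
    then have "N s (P (\<lambda>j. c j + d j) m - P (\<lambda>j. c j + d j) n) \<le> N s (P c m - P c n) + N s (P d m - P d n)"
      using PSX Xdiff[OF nrm] by (metis Ntri[OF nrm])
    also have "\<dots> < e/2 + e/2" using M1 M2 \<open>max M1 M2 \<le> m\<close> \<open>max M1 M2 \<le> n\<close> by (intro add_strict_mono) auto
    finally show "N s (P (\<lambda>j. c j + d j) m - P (\<lambda>j. c j + d j) n) < e" by simp
  qed
qed

lemma Th_scale: assumes "c \<in> \<Theta> s" shows "(\<lambda>j. a * c j) \<in> \<Theta> s"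
  unfolding Th_def
proof (intro CollectI allI impI)
  fix e :: real assume e: "e > 0"
  have e': "e / (\<bar>a\<bar> + 1) > 0" using e by simp
  obtain M where M: "\<forall>m\<ge>M. \<forall>n\<ge>M. N s (P c m - P c n) < e / (\<bar>a\<bar> + 1)"
    using Th_cauchy[OF assms e'] by force
  show "\<exists>M. \<forall>m\<ge>M. \<forall>n\<ge>M. N s (P (\<lambda>j. a * c j) m - P (\<lambda>j. a * c j) n) < e"
  proof (intro exI allI impI)
    fix m n assume mn: "M \<le> m" "M \<le> n"
    have "N s (P (\<lambda>j. a * c j) m - P (\<lambda>j. a * c j) n) = \<bar>a\<bar> * N s (P c m - P c n)"
      using Nscale[OF nrm, of "P c m - P c n" s a] PSX Xdiff[OF nrm]
      by (simp add: PS_scale scaleR_diff_right)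
    also have "\<dots> \<le> \<bar>a\<bar> * (e / (\<bar>a\<bar> + 1))" using less_imp_le[OF M[rule_format, OF mn]] by (intro mult_left_mono) auto
    also have "\<dots> < e" using e by (simp add: field_simps)
    finally show "N s (P (\<lambda>j. a * c j) m - P (\<lambda>j. a * c j) n) < e" .
  qed
qed

lemma Th_zero: "(\<lambda>j. 0) \<in> \<Theta> s" by (rule Th_fin[of 0]) auto

lemma Th_diff: assumes "c \<in> \<Theta> s" "d \<in> \<Theta> s" shows "(\<lambda>j. c j - d j) \<in> \<Theta> s"
  using Th_add[OF assms(1) Th_scale[OF assms(2), of "-1"]] by simp

lemma coord: assumes "c \<in> \<Theta> s" shows "\<bar>c i\<bar> \<le> (2 / N s (f i)) * T s c"
proof -
  have "c i *\<^sub>R f i = P c (Suc i) - P c i" by (simp add: PS_Suc)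
  then have "\<bar>c i\<bar> * N s (f i) = N s (P c (Suc i) - P c i)" using Nscale[OF nrm fX] by metis
  also have "\<dots> \<le> N s (P c (Suc i)) + N s (P c i)" using PSX by (intro Ntri_minus[OF nrm])
  also have "\<dots> \<le> 2 * T s c" using T_upper[OF assms] by (smt (verit))
  finally show ?thesis using fnz[of s i] by (simp add: field_simps)
qed

end


lemma trunc_sum: "(\<Sum>i<n. a i * unit_seq i j) = (if j < n then a j else (0::real))"
  by (induction n) (auto simp: unit_seq_def less_Suc_eq)

lemma PS_trunc: "PS f (\<lambda>j. if j < n then c j else 0) m = PS f c (min m n)"
proof (induction m)
  case 0 then show ?case by (simp add: PS_0)
next
  case (Suc m)
  show ?case
  proof (cases "m < n")
    case True
    then have "min (Suc m) n = Suc (min m n)" by simp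
    then show ?thesis using Suc True by (simp add: PS_Suc)
  next
    case False
    then have "min (Suc m) n = min m n" by simp
    then show ?thesis using Suc False by (simp add: PS_Suc)
  qed
qed

context setting begin

lemma T_zero: "T s (\<lambda>j. 0) = 0"
  using T_least[of s "\<lambda>j. 0" 0] T_nn[OF Th_zero, of s] N0[OF nrm] by (simp add: PS_zero)

lemma T_eq0: assumes "c \<in> \<Theta> s" "T s c = 0" shows "c = (\<lambda>j. 0)"
proof
  fix i show "c i = 0" using coord[OF assms(1), of i] assms(2) by simp
qed

lemma T_scale: assumes "c \<in> \<Theta> s" shows "T s (\<lambda>j. a * c j) = \<bar>a\<bar> * T s c"
proof (rule antisym)
  have eq: "N s (P (\<lambda>j. a * c j) n) = \<bar>a\<bar> * N s (P c n)" for n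
    using Nscale[OF nrm PSX] by (simp add: PS_scale)
  show "T s (\<lambda>j. a * c j) \<le> \<bar>a\<bar> * T s c"
    by (rule T_least) (use eq T_upper[OF assms] in \<open>auto intro: mult_left_mono\<close>)
  show "\<bar>a\<bar> * T s c \<le> T s (\<lambda>j. a * c j)"
  proof (cases "a = 0")
    case True then show ?thesis using T_nn[OF Th_zero, of s] by simp
  next
    case False
    have "N s (P c n) \<le> T s (\<lambda>j. a * c j) / \<bar>a\<bar>" for n
      using T_upper[OF Th_scale[OF assms], of a n] eq[of n] False by (simp add: field_simps)
    then have "T s c \<le> T s (\<lambda>j. a * c j) / \<bar>a\<bar>" by (rule T_least)
    then show ?thesis using False by (simp add: field_simps)
  qed
qed

lemma T_tri: assumes "c \<in> \<Theta> s" "d \<in> \<Theta> s" shows "T s (\<lambda>j. c j + d j) \<le> T s c + T s d"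
proof (rule T_least)
  fix n
  have "N s (P (\<lambda>j. c j + d j) n) \<le> N s (P c n) + N s (P d n)"
    unfolding PS_add using PSX by (intro Ntri[OF nrm])
  also have "\<dots> \<le> T s c + T s d" using T_upper assms by (intro add_mono) auto
  finally show "N s (P (\<lambda>j. c j + d j) n) \<le> T s c + T s d" .
qed

lemma T_diffP: "P (\<lambda>j. c j - d j) m = P c m - P d m" by (rule PS_diff)

lemma Th_complete:
  assumes u: "\<And>n. u n \<in> \<Theta> s"
    and cau: "\<forall>e>0. \<exists>M. \<forall>m\<ge>M. \<forall>n\<ge>M. T s (\<lambda>j. u m j - u n j) < e"
  shows "\<exists>c\<in>\<Theta> s. (\<lambda>n. T s (\<lambda>j. u n j - c j)) \<longlonglongrightarrow> 0"
proof -
  have ud: "(\<lambda>j. u m j - u n j) \<in> \<Theta> s" for m n using u by (intro Th_diff)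
  have cau_i: "Cauchy (\<lambda>n. u n i)" for i
  proof (rule metric_CauchyI)
    fix e :: real assume e: "e > 0"
    define K where "K = 2 / N s (f i)"
    have K: "K > 0" unfolding K_def using fnz by simp
    obtain M where M: "\<forall>m\<ge>M. \<forall>n\<ge>M. T s (\<lambda>j. u m j - u n j) < e / K"
      using cau K e by (meson divide_pos_pos)
    show "\<exists>M. \<forall>m\<ge>M. \<forall>n\<ge>M. dist (u m i) (u n i) < e"
    proof (intro exI allI impI)
      fix m n assume mn: "M \<le> m" "M \<le> n"
      have "\<bar>u m i - u n i\<bar> \<le> K * T s (\<lambda>j. u m j - u n j)"
        using coord[OF ud[of m n], of i] unfolding K_def by simp
      also have "\<dots> < K * (e / K)" using M mn K by (intro mult_strict_left_mono) auto
      finally show "dist (u m i) (u n i) < e" using K by (simp add: dist_real_def)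
    qed
  qed
  define c where "c i = lim (\<lambda>n. u n i)" for i
  have uc: "(\<lambda>n. u n i) \<longlonglongrightarrow> c i" for i
    unfolding c_def using cau_i[of i] by (simp add: Cauchy_convergent_iff convergent_LIMSEQ_iff)
  have del: "(\<lambda>k. N s (P (u k) m - P c m)) \<longlonglongrightarrow> 0" for m
  proof (rule tendsto_sandwich[of "\<lambda>k. 0" _ _ "\<lambda>k. \<Sum>i<m. \<bar>u k i - c i\<bar> * N s (f i)"])
    show "\<forall>\<^sub>F k in sequentially. 0 \<le> N s (P (u k) m - P c m)"
      using Nnn[OF nrm] PSX Xdiff[OF nrm] by auto
    show "\<forall>\<^sub>F k in sequentially. N s (P (u k) m - P c m) \<le> (\<Sum>i<m. \<bar>u k i - c i\<bar> * N s (f i))"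
      using PS_bound[of s "\<lambda>j. u _ j - c j" m] by (simp add: PS_diff)
    show "(\<lambda>k. 0) \<longlonglongrightarrow> (0::real)" by simp
    have "(\<lambda>k. \<Sum>i<m. \<bar>u k i - c i\<bar> * N s (f i)) \<longlonglongrightarrow> (\<Sum>i<m. \<bar>c i - c i\<bar> * N s (f i))"
      by (intro tendsto_intros uc)
    then show "(\<lambda>k. \<Sum>i<m. \<bar>u k i - c i\<bar> * N s (f i)) \<longlonglongrightarrow> 0" by simp
  qed
  have key: "\<exists>M. \<forall>n\<ge>M. \<forall>m. N s (P (u n) m - P c m) \<le> e" if e: "e > 0" for e
  proof -
    obtain M where M: "\<forall>m\<ge>M. \<forall>n\<ge>M. T s (\<lambda>j. u m j - u n j) < e" using cau e by blast
    have "N s (P (u n) m - P c m) \<le> e" if n: "n \<ge> M" for n m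
    proof (rule le_lim[where M=M])
      show "(\<lambda>k. N s (P (u k) m - P c m)) \<longlonglongrightarrow> 0" by (rule del)
      fix k assume k: "k \<ge> M"
      have "N s (P (u n) m - P c m) \<le> N s (P (u n) m - P (u k) m) + N s (P (u k) m - P c m)"
        using PSX by (intro Ntri_diff[OF nrm])
      also have "N s (P (u n) m - P (u k) m) \<le> T s (\<lambda>j. u n j - u k j)"
        using T_upper[OF ud[of n k], of m] by (simp add: PS_diff)
      also have "\<dots> \<le> e" using M n k by (meson less_imp_le)
      finally show "N s (P (u n) m - P c m) \<le> e + N s (P (u k) m - P c m)" by simp
    qed
    then show ?thesis by blast
  qed
  have cTh: "c \<in> \<Theta> s" unfolding Th_def
  proof (intro CollectI allI impI)
    fix e :: real assume e: "e > 0"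
    obtain M where M: "\<forall>n\<ge>M. \<forall>m. N s (P (u n) m - P c m) \<le> e/3" using key[of "e/3"] e by auto
    obtain M2 where M2: "\<forall>m\<ge>M2. \<forall>n\<ge>M2. N s (P (u M) m - P (u M) n) < e/3"
      using Th_cauchy[OF u[of M], of "e/3"] e by auto
    show "\<exists>M. \<forall>m\<ge>M. \<forall>n\<ge>M. N s (P c m - P c n) < e"
    proof (intro exI allI impI)
      fix m n assume mn: "M2 \<le> m" "M2 \<le> n"
      have "N s (P c m - P c n) \<le> N s (P c m - P (u M) m) + N s (P (u M) m - P c n)"
        using PSX by (intro Ntri_diff[OF nrm])
      also have "N s (P (u M) m - P c n) \<le> N s (P (u M) m - P (u M) n) + N s (P (u M) n - P c n)"
        using PSX by (intro Ntri_diff[OF nrm])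
      also have "N s (P c m - P (u M) m) = N s (P (u M) m - P c m)" using PSX by (intro Ncomm[OF nrm])
      finally have "N s (P c m - P c n) \<le> N s (P (u M) m - P c m) + (N s (P (u M) m - P (u M) n) + N s (P (u M) n - P c n))" by simp
      moreover have "N s (P (u M) m - P c m) \<le> e/3" "N s (P (u M) n - P c n) \<le> e/3" using M by auto
      moreover have "N s (P (u M) m - P (u M) n) < e/3" using M2 mn by auto
      ultimately show "N s (P c m - P c n) < e" by linarith
    qed
  qed
  have "(\<lambda>n. T s (\<lambda>j. u n j - c j)) \<longlonglongrightarrow> 0"
  proof (rule LIMSEQ_I)
    fix r :: real assume r: "r > 0"
    obtain M where M: "\<forall>n\<ge>M. \<forall>m. N s (P (u n) m - P c m) \<le> r/2" using key[of "r/2"] r by auto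
    show "\<exists>no. \<forall>n\<ge>no. norm (T s (\<lambda>j. u n j - c j) - 0) < r"
    proof (intro exI allI impI)
      fix n assume n: "n \<ge> M"
      have "T s (\<lambda>j. u n j - c j) \<le> r/2" using M n by (intro T_least) (simp add: PS_diff)
      moreover have "0 \<le> T s (\<lambda>j. u n j - c j)" using Th_diff[OF u cTh] by (rule T_nn)
      ultimately show "norm (T s (\<lambda>j. u n j - c j) - 0) < r" using r by simp
    qed
  qed
  then show ?thesis using cTh by blast
qed

lemma unit_Th: "unit_seq i \<in> \<Theta> s" by (rule Th_fin[of "Suc i"]) (auto simp: unit_seq_def)

lemma trunc_Th: "(\<lambda>j. \<Sum>i<n. a i * unit_seq i j) \<in> \<Theta> s"
  by (rule Th_fin[of n]) (simp add: trunc_sum)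

lemma basis_ex: assumes c: "c \<in> \<Theta> s"
  shows "(\<lambda>n. T s (\<lambda>j. c j - (\<Sum>i<n. c i * unit_seq i j))) \<longlonglongrightarrow> 0"
proof (rule LIMSEQ_I)
  fix r :: real assume r: "r > 0"
  obtain M where M: "\<forall>m\<ge>M. \<forall>n\<ge>M. N s (P c m - P c n) < r/2" using Th_cauchy[OF c, of "r/2"] r by auto
  show "\<exists>no. \<forall>n\<ge>no. norm (T s (\<lambda>j. c j - (\<Sum>i<n. c i * unit_seq i j)) - 0) < r"
  proof (intro exI allI impI)
    fix n assume n: "n \<ge> M"
    have "T s (\<lambda>j. c j - (\<Sum>i<n. c i * unit_seq i j)) \<le> r/2"
    proof (rule T_least)
      fix m
      have "P (\<lambda>j. c j - (\<Sum>i<n. c i * unit_seq i j)) m = P c m - P c (min m n)"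
        by (simp add: PS_diff trunc_sum PS_trunc)
      moreover have "N s (P c m - P c (min m n)) \<le> r/2"
      proof (cases "m \<le> n")
        case True then show ?thesis using N0[OF nrm] r by simp
      next
        case False then show ?thesis using M n by (simp add: less_imp_le)
      qed
      ultimately show "N s (P (\<lambda>j. c j - (\<Sum>i<n. c i * unit_seq i j)) m) \<le> r/2" by simp
    qed
    moreover have "0 \<le> T s (\<lambda>j. c j - (\<Sum>i<n. c i * unit_seq i j))"
      using Th_diff[OF c trunc_Th] by (rule T_nn)
    ultimately show "norm (T s (\<lambda>j. c j - (\<Sum>i<n. c i * unit_seq i j)) - 0) < r" using r by simp
  qed
qed

lemma basis_uniq: assumes c: "c \<in> \<Theta> s"
  and a: "(\<lambda>n. T s (\<lambda>j. c j - (\<Sum>i<n. a i * unit_seq i j))) \<longlonglongrightarrow> 0"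
  shows "a = c"
proof
  fix i
  define K where "K = 2 / N s (f i)"
  have "\<bar>c i - a i\<bar> \<le> 0 + 0"
  proof (rule le_lim[where M="Suc i"])
    show "(\<lambda>n. K * T s (\<lambda>j. c j - (\<Sum>i<n. a i * unit_seq i j))) \<longlonglongrightarrow> 0"
      using tendsto_mult[OF tendsto_const a, of K] by simp
    fix n assume n: "n \<ge> Suc i"
    have "\<bar>c i - (\<Sum>k<n. a k * unit_seq k i)\<bar> \<le> K * T s (\<lambda>j. c j - (\<Sum>i<n. a i * unit_seq i j))"
      unfolding K_def using coord[OF Th_diff[OF c trunc_Th[where n=n and a=a]], of i] by simp
    then show "\<bar>c i - a i\<bar> \<le> 0 + 0 + K * T s (\<lambda>j. c j - (\<Sum>i<n. a i * unit_seq i j))"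
      using n by (simp add: trunc_sum)
  qed
  then show "a i = c i" by simp
qed

lemma CB: "CB_space (\<Theta> s) (T s)"
  unfolding CB_space_def BK_space_def seq_norm_on_def seq_subspace_def
proof (intro conjI ballI allI impI)
  show "(\<lambda>j. 0) \<in> \<Theta> s" by (rule Th_zero)
  show "(\<lambda>j. c j + d j) \<in> \<Theta> s" if "c \<in> \<Theta> s" "d \<in> \<Theta> s" for c d using that by (rule Th_add)
  show "(\<lambda>j. a * c j) \<in> \<Theta> s" if "c \<in> \<Theta> s" for c a using that by (rule Th_scale)
  show "0 \<le> T s c" if "c \<in> \<Theta> s" for c using that by (rule T_nn)
  show "(T s c = 0) = (c = (\<lambda>j. 0))" if "c \<in> \<Theta> s" for c using that T_eq0 T_zero by auto
  show "T s (\<lambda>j. a * c j) = \<bar>a\<bar> * T s c" if "c \<in> \<Theta> s" for c a using that by (rule T_scale)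
  show "T s (\<lambda>j. c j + d j) \<le> T s c + T s d" if "c \<in> \<Theta> s" "d \<in> \<Theta> s" for c d using that by (rule T_tri)
  show "\<exists>c\<in>\<Theta> s. (\<lambda>n. T s (\<lambda>j. u n j - c j)) \<longlonglongrightarrow> 0"
    if "(\<forall>n. u n \<in> \<Theta> s) \<and> (\<forall>e>0. \<exists>M. \<forall>m\<ge>M. \<forall>n\<ge>M. T s (\<lambda>j. u m j - u n j) < e)" for u
    using that Th_complete by blast
  show "\<exists>C. \<forall>c\<in>\<Theta> s. \<bar>c i\<bar> \<le> C * T s c" for i using coord by blast
  show "unit_seq i \<in> \<Theta> s" for i by (rule unit_Th)
  show "\<exists>!a. (\<lambda>n. T s (\<lambda>j. c j - (\<Sum>i<n. a i * unit_seq i j))) \<longlonglongrightarrow> 0" if "c \<in> \<Theta> s" for c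
    using basis_ex[OF that] basis_uniq[OF that] by blast
qed

end


lemma sandwich0:
  fixes a b :: "nat \<Rightarrow> real"
  assumes "\<And>n. 0 \<le> a n" "\<And>n. a n \<le> b n" "b \<longlonglongrightarrow> 0" shows "a \<longlonglongrightarrow> 0"
  by (rule tendsto_sandwich[of "\<lambda>n. 0" _ _ b]) (use assms in auto)

context
  fixes X :: "'a::real_vector set" and N :: "'a \<Rightarrow> real" and h :: "'a \<Rightarrow> real"
  assumes nrm: "is_norm_on X N" and h: "bdd_lin_fun X N h"
begin

lemma h0: "h 0 = 0"
  using h X0[OF nrm] unfolding bdd_lin_fun_def by (metis mult_zero_left scaleR_zero_left)

lemma dual_bdd: "bdd_above ((\<lambda>x. \<bar>h x\<bar>) ` {x\<in>X. N x \<le> 1})"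
proof -
  obtain C where C: "\<forall>x\<in>X. \<bar>h x\<bar> \<le> C * N x" using h unfolding bdd_lin_fun_def by blast
  have "\<bar>h x\<bar> \<le> \<bar>C\<bar>" if "x \<in> X" "N x \<le> 1" for x
  proof -
    have "\<bar>h x\<bar> \<le> C * N x" using C that by auto
    also have "\<dots> \<le> \<bar>C\<bar> * N x" using Nnn[OF nrm that(1)] by (intro mult_right_mono) auto
    also have "\<dots> \<le> \<bar>C\<bar> * 1" using that by (intro mult_left_mono) auto
    finally show ?thesis by simp
  qed
  then show ?thesis by (intro bdd_aboveI2[where M="\<bar>C\<bar>"]) auto
qed

lemma dual_nn: "0 \<le> dual_norm X N h"
proof -
  have "\<bar>h 0\<bar> \<le> dual_norm X N h" unfolding dual_norm_def
    using dual_bdd X0[OF nrm] N0[OF nrm] by (intro cSUP_upper) auto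
  then show ?thesis using h0 by simp
qed

lemma dual_le: assumes x: "x \<in> X" shows "\<bar>h x\<bar> \<le> dual_norm X N h * N x"
proof (cases "x = 0")
  case True then show ?thesis using h0 N0[OF nrm] by simp
next
  case False
  then have Np: "N x > 0" using Nnn[OF nrm x] Nz[OF nrm x] by auto
  define x' where "x' = (1 / N x) *\<^sub>R x"
  have "N x' = 1" unfolding x'_def using Nscale[OF nrm x] Np by simp
  then have "x' \<in> {x\<in>X. N x \<le> 1}" unfolding x'_def using Xscale[OF nrm x] by auto
  then have "\<bar>h x'\<bar> \<le> dual_norm X N h" unfolding dual_norm_def using dual_bdd by (intro cSUP_upper) auto
  moreover have "h x' = h x / N x" unfolding x'_def using h x unfolding bdd_lin_fun_def by simp
  ultimately show ?thesis using Np by (simp add: abs_div divide_le_eq mult.commute)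
qed

end

context setting begin

lemma Th_mono: "\<Theta> (Suc s) \<subseteq> \<Theta> s"
proof
  fix c assume c: "c \<in> \<Theta> (Suc s)"
  show "c \<in> \<Theta> s" unfolding Th_def
  proof (intro CollectI allI impI)
    fix e :: real assume "e > 0"
    then obtain M where M: "\<forall>m\<ge>M. \<forall>n\<ge>M. N (Suc s) (P c m - P c n) < e" using Th_cauchy[OF c] by blast
    have le: "N s (P c m - P c n) \<le> N (Suc s) (P c m - P c n)" for m n
      by (rule Nmono[of s "Suc s"]) (auto intro: Xdiff[OF nrm] PSX)
    show "\<exists>M. \<forall>m\<ge>M. \<forall>n\<ge>M. N s (P c m - P c n) < e"
    proof (intro exI[of _ M] allI impI)
      fix m n assume "M \<le> m" "M \<le> n"
      then have "N (Suc s) (P c m - P c n) < e" using M by blast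
      then show "N s (P c m - P c n) < e" using le[of m n] by linarith
    qed
  qed
qed

lemma T_mono: assumes "c \<in> \<Theta> (Suc s)" shows "T s c \<le> T (Suc s) c"
proof (rule T_least)
  fix n
  have "N s (P c n) \<le> N (Suc s) (P c n)" by (rule Nmono[of s "Suc s"]) (auto intro: PSX)
  also have "\<dots> \<le> T (Suc s) c" using T_upper[OF assms] .
  finally show "N s (P c n) \<le> T (Suc s) c" .
qed

lemma ThF_nontriv: "(\<Inter>s. \<Theta> s) \<noteq> {(\<lambda>j. 0)}"
proof
  assume "(\<Inter>s. \<Theta> s) = {(\<lambda>j. 0)}"
  moreover have "unit_seq 0 \<in> (\<Inter>s. \<Theta> s)" using unit_Th by blast
  ultimately have "unit_seq 0 = (\<lambda>j. 0)" by blast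
  then have "unit_seq 0 0 = 0" by metis
  then show False by (simp add: unit_seq_def)
qed

lemma dense: assumes c: "c \<in> \<Theta> s" and e: "e > 0"
  shows "\<exists>d\<in>(\<Inter>t. \<Theta> t). T s (\<lambda>j. c j - d j) < e"
proof -
  have "\<exists>no. \<forall>n\<ge>no. norm (T s (\<lambda>j. c j - (\<Sum>i<n. c i * unit_seq i j)) - 0) < e"
    by (rule LIMSEQ_D[OF basis_ex[OF c] e])
  then obtain n0 where H: "\<forall>n\<ge>n0. norm (T s (\<lambda>j. c j - (\<Sum>i<n. c i * unit_seq i j)) - 0) < e" ..
  have "norm (T s (\<lambda>j. c j - (\<Sum>i<n0. c i * unit_seq i j)) - 0) < e" using H[rule_format, of n0] by simp
  then have 1: "T s (\<lambda>j. c j - (\<Sum>i<n0. c i * unit_seq i j)) < e" by (simp add: abs_less_iff)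
  have 2: "(\<lambda>j. \<Sum>i<n0. c i * unit_seq i j) \<in> (\<Inter>t. \<Theta> t)" using trunc_Th by (rule INT_I)
  show ?thesis by (rule bexI[where P="\<lambda>d. T s (\<lambda>j. c j - d j) < e" and x="\<lambda>j. \<Sum>i<n0. c i * unit_seq i j", OF 1 2])
qed

definition xl :: "nat \<Rightarrow> (nat \<Rightarrow> real) \<Rightarrow> 'a" where
  "xl s c = (SOME x. x \<in> X s \<and> (\<lambda>n. N s (P c n - x)) \<longlonglongrightarrow> 0)"

lemma xl: assumes "c \<in> \<Theta> s" shows "xl s c \<in> X s" "(\<lambda>n. N s (P c n - xl s c)) \<longlonglongrightarrow> 0"
proof -
  have cau: "\<forall>e>0. \<exists>M. \<forall>m\<ge>M. \<forall>n\<ge>M. N s (P c m - P c n) < e"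
    using assms unfolding Th_def by (rule CollectD)
  have B: "\<forall>u. (\<forall>n. u n \<in> X s) \<and> (\<forall>e>0. \<exists>M. \<forall>m\<ge>M. \<forall>n\<ge>M. N s (u m - u n) < e)
        \<longrightarrow> (\<exists>x\<in>X s. (\<lambda>n. N s (u n - x)) \<longlonglongrightarrow> 0)"
    using ban[of s] unfolding banach_on_def by (rule conjunct2)
  have "\<exists>x\<in>X s. (\<lambda>n. N s (P c n - x)) \<longlonglongrightarrow> 0"
    using B[rule_format, of "P c"] PSX cau by blast
  then have "\<exists>x. x \<in> X s \<and> (\<lambda>n. N s (P c n - x)) \<longlonglongrightarrow> 0" by blast
  then have "xl s c \<in> X s \<and> (\<lambda>n. N s (P c n - xl s c)) \<longlonglongrightarrow> 0" unfolding xl_def by (rule someI_ex)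
  then show "xl s c \<in> X s" "(\<lambda>n. N s (P c n - xl s c)) \<longlonglongrightarrow> 0" by auto
qed

lemma xl_unique: assumes "c \<in> \<Theta> s" "x \<in> X s" "(\<lambda>n. N s (P c n - x)) \<longlonglongrightarrow> 0"
  shows "xl s c = x"
  using lim_unique[OF nrm xl(1)[OF assms(1)] assms(2) PSX xl(2)[OF assms(1)] assms(3)] .

lemma xl_bound: assumes c: "c \<in> \<Theta> s" shows "N s (xl s c) \<le> T s c"
proof (rule le_lim[where M=0])
  show "(\<lambda>n. N s (P c n - xl s c)) \<longlonglongrightarrow> 0" using xl(2)[OF c] .
  fix n
  have "N s (xl s c) \<le> N s (P c n) + N s (xl s c - P c n)" using PSX xl(1)[OF c] by (intro Nrev[OF nrm])
  also have "N s (xl s c - P c n) = N s (P c n - xl s c)" using PSX xl(1)[OF c] by (intro Ncomm[OF nrm])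
  finally show "N s (xl s c) \<le> T s c + N s (P c n - xl s c)" using T_upper[OF c, of n] by simp
qed

lemma xl_add: assumes c: "c \<in> \<Theta> s" and d: "d \<in> \<Theta> s"
  shows "xl s (\<lambda>j. c j + d j) = xl s c + xl s d"
proof (rule xl_unique[OF Th_add[OF c d]])
  show "xl s c + xl s d \<in> X s" using xl c d by (intro Xadd[OF nrm])
  show "(\<lambda>n. N s (P (\<lambda>j. c j + d j) n - (xl s c + xl s d))) \<longlonglongrightarrow> 0"
  proof (rule sandwich0)
    show "0 \<le> N s (P (\<lambda>j. c j + d j) n - (xl s c + xl s d))" for n
      by (intro Nnn[OF nrm] Xdiff[OF nrm] Xadd[OF nrm] PSX xl(1) c d)
    show "N s (P (\<lambda>j. c j + d j) n - (xl s c + xl s d)) \<le> N s (P c n - xl s c) + N s (P d n - xl s d)" for n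
    proof -
      have "P (\<lambda>j. c j + d j) n - (xl s c + xl s d) = (P c n - xl s c) + (P d n - xl s d)"
        by (simp add: PS_add)
      then show ?thesis by (simp only:) (intro Ntri[OF nrm] Xdiff[OF nrm] PSX xl(1) c d)
    qed
    show "(\<lambda>n. N s (P c n - xl s c) + N s (P d n - xl s d)) \<longlonglongrightarrow> 0"
      using tendsto_add[OF xl(2)[OF c] xl(2)[OF d]] by simp
  qed
qed

lemma xl_scale: assumes c: "c \<in> \<Theta> s"
  shows "xl s (\<lambda>j. a * c j) = a *\<^sub>R xl s c"
proof (rule xl_unique[OF Th_scale[OF c]])
  show "a *\<^sub>R xl s c \<in> X s" using xl c by (intro Xscale[OF nrm])
  have "N s (P (\<lambda>j. a * c j) n - a *\<^sub>R xl s c) = \<bar>a\<bar> * N s (P c n - xl s c)" for n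
  proof -
    have "P (\<lambda>j. a * c j) n - a *\<^sub>R xl s c = a *\<^sub>R (P c n - xl s c)"
      by (simp add: PS_scale scaleR_diff_right)
    then show ?thesis by (simp only:) (intro Nscale[OF nrm] Xdiff[OF nrm] PSX xl(1) c)
  qed
  moreover have "(\<lambda>n. \<bar>a\<bar> * N s (P c n - xl s c)) \<longlonglongrightarrow> 0"
    using tendsto_mult[OF tendsto_const xl(2)[OF c], of "\<bar>a\<bar>"] by simp
  ultimately show "(\<lambda>n. N s (P (\<lambda>j. a * c j) n - a *\<^sub>R xl s c)) \<longlonglongrightarrow> 0" by simp
qed

lemma P_g: "P (\<lambda>i. g i x) n = (\<Sum>i<n. g i x *\<^sub>R f i)" unfolding PS_def by simp

lemma g_Th: assumes x: "x \<in> X s" shows "(\<lambda>i. g i x) \<in> \<Theta> s"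
  unfolding Th_def
proof (intro CollectI allI impI)
  fix e :: real assume e: "e > 0"
  have cv0: "(\<lambda>n. N s (x - (\<Sum>i<n. g i x *\<^sub>R f i))) \<longlonglongrightarrow> 0" using conv x by blast
  have cv: "(\<lambda>n. N s (x - P (\<lambda>i. g i x) n)) \<longlonglongrightarrow> 0" using cv0 unfolding PS_def .
  have e2: "e/2 > 0" using e by simp
  obtain M where M: "\<forall>n\<ge>M. norm (N s (x - P (\<lambda>i. g i x) n) - 0) < e/2"
    using LIMSEQ_D[OF cv e2] by blast
  show "\<exists>M. \<forall>m\<ge>M. \<forall>n\<ge>M. N s (P (\<lambda>i. g i x) m - P (\<lambda>i. g i x) n) < e"
  proof (intro exI allI impI)
    fix m n assume mn: "M \<le> m" "M \<le> n"
    let ?c = "\<lambda>i. g i x"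
    have "N s (P ?c m - P ?c n) \<le> N s (P ?c m - x) + N s (x - P ?c n)" using PSX x by (intro Ntri_diff[OF nrm])
    also have "N s (P ?c m - x) = N s (x - P ?c m)" using PSX x by (intro Ncomm[OF nrm])
    finally have "N s (P ?c m - P ?c n) \<le> N s (x - P ?c m) + N s (x - P ?c n)" .
    moreover have "\<bar>N s (x - P ?c m)\<bar> < e/2" "\<bar>N s (x - P ?c n)\<bar> < e/2"
      using M[rule_format, OF mn(1)] M[rule_format, OF mn(2)] by simp_all
    ultimately show "N s (P ?c m - P ?c n) < e" by linarith
  qed
qed

lemma xl_g: assumes x: "x \<in> X s" shows "xl s (\<lambda>i. g i x) = x"
proof (rule xl_unique[OF g_Th[OF x] x])
  have cv0: "(\<lambda>n. N s (x - (\<Sum>i<n. g i x *\<^sub>R f i))) \<longlonglongrightarrow> 0" using conv x by blast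
  then have "(\<lambda>n. N s (x - P (\<lambda>i. g i x) n)) \<longlonglongrightarrow> 0" unfolding PS_def .
  moreover have "N s (x - P (\<lambda>i. g i x) n) = N s (P (\<lambda>i. g i x) n - x)" for n
    using PSX x by (intro Ncomm[OF nrm])
  ultimately show "(\<lambda>n. N s (P (\<lambda>i. g i x) n - x)) \<longlonglongrightarrow> 0" by simp
qed

lemma xl_unit: "xl s (unit_seq i) = f i"
proof (rule xl_unique[OF unit_Th fX])
  have "P (unit_seq i) n = P (unit_seq i) (Suc i)" if "n \<ge> Suc i" for n
    by (rule PS_fin[OF _ that]) (auto simp: unit_seq_def)
  moreover have "P (unit_seq i) (Suc i) = f i"
  proof -
    have "P (unit_seq i) (Suc i) = P (unit_seq i) i + f i" by (simp add: PS_Suc unit_seq_def)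
    moreover have "P (unit_seq i) i = 0" unfolding PS_def unit_seq_def by simp
    ultimately show ?thesis by simp
  qed
  ultimately have "N s (P (unit_seq i) n - f i) = 0" if "n \<ge> Suc i" for n
    using N0[OF nrm] that by simp
  then have "\<forall>\<^sub>F n in sequentially. N s (P (unit_seq i) n - f i) = 0"
    by (rule eventually_sequentiallyI)
  then show "(\<lambda>n. N s (P (unit_seq i) n - f i)) \<longlonglongrightarrow> 0" by (rule tendsto_eventually)
qed

lemma xl_shift: assumes c: "c \<in> (\<Inter>t. \<Theta> t)" shows "xl 0 c = xl s c"
proof (rule xl_unique)
  show "c \<in> \<Theta> 0" using c by auto
  have cs: "c \<in> \<Theta> s" using c by auto
  show "xl s c \<in> X 0" using xl(1)[OF cs] by (rule XF0)
  show "(\<lambda>n. N 0 (P c n - xl s c)) \<longlonglongrightarrow> 0"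
  proof (rule sandwich0)
    show "0 \<le> N 0 (P c n - xl s c)" for n by (intro Nnn[OF nrm] Xdiff[OF nrm] PSX XF0[OF xl(1)[OF cs]])
    show "N 0 (P c n - xl s c) \<le> N s (P c n - xl s c)" for n
      using PSX xl(1)[OF cs] Xdiff[OF nrm] by (intro Nmono) auto
    show "(\<lambda>n. N s (P c n - xl s c)) \<longlonglongrightarrow> 0" using xl(2)[OF cs] .
  qed
qed

end


context setting begin

lemma gl: "bdd_lin_fun (X 0) (N 0) (g i)" using gb by blast

lemma g_add: "x \<in> X s \<Longrightarrow> y \<in> X s \<Longrightarrow> g i (x + y) = g i x + g i y"
  using gl[of i] XF0 unfolding bdd_lin_fun_def by blast
lemma g_scale: "x \<in> X s \<Longrightarrow> g i (c *\<^sub>R x) = c * g i x"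
  using gl[of i] XF0 unfolding bdd_lin_fun_def by blast
lemma g_bnd: "\<exists>C. \<forall>x\<in>X s. \<bar>g i x\<bar> \<le> C * N s x"
proof -
  obtain C where C: "\<forall>x\<in>X 0. \<bar>g i x\<bar> \<le> C * N 0 x" using gl[of i] unfolding bdd_lin_fun_def by blast
  have "\<bar>g i x\<bar> \<le> \<bar>C\<bar> * N s x" if x: "x \<in> X s" for x
  proof -
    have x0: "x \<in> X 0" using XF0[OF x] .
    have "\<bar>g i x\<bar> \<le> C * N 0 x" using C x0 by blast
    also have "\<dots> \<le> \<bar>C\<bar> * N 0 x" using Nnn[OF nrm x0] by (intro mult_right_mono) auto
    also have "\<dots> \<le> \<bar>C\<bar> * N s x" using Nmono[of 0 s x] x by (intro mult_left_mono) auto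
    finally show ?thesis .
  qed
  then show ?thesis by blast
qed

lemma ubp_app: "\<exists>B. \<forall>n. \<forall>x\<in>X s. N s (P (\<lambda>i. g i x) n) \<le> B * N s x"
proof (rule ubp[OF ban, where p="\<lambda>n x. N s (P (\<lambda>i. g i x) n)"])
  fix n x y assume x: "x \<in> X s" and y: "y \<in> X s"
  have "(\<lambda>i. g i (x + y)) = (\<lambda>i. g i x + g i y)" using g_add[OF x y] by simp
  then have "P (\<lambda>i. g i (x + y)) n = P (\<lambda>i. g i x) n + P (\<lambda>i. g i y) n" by (simp add: PS_add)
  then show "N s (P (\<lambda>i. g i (x + y)) n) \<le> N s (P (\<lambda>i. g i x) n) + N s (P (\<lambda>i. g i y) n)"
    by (simp only:) (intro Ntri[OF nrm] PSX)
next
  fix n x c assume x: "x \<in> X s"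
  have "(\<lambda>i. g i (c *\<^sub>R x)) = (\<lambda>i. c * g i x)" using g_scale[OF x] by simp
  then have "P (\<lambda>i. g i (c *\<^sub>R x)) n = c *\<^sub>R P (\<lambda>i. g i x) n" by (simp add: PS_scale)
  then show "N s (P (\<lambda>i. g i (c *\<^sub>R x)) n) = \<bar>c\<bar> * N s (P (\<lambda>i. g i x) n)"
    by (simp only:) (intro Nscale[OF nrm] PSX)
next
  fix n
  have "\<forall>i. \<exists>C. \<forall>x\<in>X s. \<bar>g i x\<bar> \<le> C * N s x" using g_bnd by blast
  then have "\<exists>C. \<forall>i. \<forall>x\<in>X s. \<bar>g i x\<bar> \<le> C i * N s x" by (rule choice)
  then obtain C where C0: "\<forall>i. \<forall>x\<in>X s. \<bar>g i x\<bar> \<le> C i * N s x" ..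
  have C: "\<bar>g i x\<bar> \<le> C i * N s x" if "x \<in> X s" for i x using C0 that by blast
  have "N s (P (\<lambda>i. g i x) n) \<le> (\<Sum>i<n. C i * N s (f i)) * N s x" if x: "x \<in> X s" for x
  proof -
    have "N s (P (\<lambda>i. g i x) n) \<le> (\<Sum>i<n. \<bar>g i x\<bar> * N s (f i))" by (rule PS_bound)
    also have "\<dots> \<le> (\<Sum>i<n. (C i * N s x) * N s (f i))"
      using C[OF x] Nnn[OF nrm fX] by (intro sum_mono mult_right_mono) auto
    also have "\<dots> = (\<Sum>i<n. C i * N s (f i)) * N s x" unfolding sum_distrib_right by (rule sum.cong) (simp_all add: mult_ac)
    finally show ?thesis .
  qed
  then show "\<exists>L. \<forall>x\<in>X s. N s (P (\<lambda>i. g i x) n) \<le> L * N s x" by blast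
next
  fix x assume x: "x \<in> X s"
  have cv0: "(\<lambda>n. N s (x - (\<Sum>i<n. g i x *\<^sub>R f i))) \<longlonglongrightarrow> 0" using conv x by blast
  have cv: "(\<lambda>n. N s (x - P (\<lambda>i. g i x) n)) \<longlonglongrightarrow> 0" using cv0 unfolding PS_def .
  have "Bseq (\<lambda>n. N s (x - P (\<lambda>i. g i x) n))" using cv by (intro convergent_imp_Bseq convergentI)
  then obtain K where K: "\<forall>n. norm (N s (x - P (\<lambda>i. g i x) n)) \<le> K" by (rule BseqE)
  have "N s (P (\<lambda>i. g i x) n) \<le> N s x + K" for n
  proof -
    have "N s (P (\<lambda>i. g i x) n) \<le> N s x + N s (P (\<lambda>i. g i x) n - x)" using x PSX by (intro Nrev[OF nrm])
    also have "N s (P (\<lambda>i. g i x) n - x) = N s (x - P (\<lambda>i. g i x) n)" using x PSX by (intro Ncomm[OF nrm])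
    also have "\<dots> \<le> K" using K[rule_format, of n] by simp
    finally show ?thesis by simp
  qed
  then show "\<exists>B. \<forall>n. N s (P (\<lambda>i. g i x) n) \<le> B" by blast
qed

lemma lower: assumes x: "x \<in> X s" shows "N s x \<le> T s (\<lambda>i. g i x)"
proof (rule le_lim[where M=0])
  have cv0: "(\<lambda>n. N s (x - (\<Sum>i<n. g i x *\<^sub>R f i))) \<longlonglongrightarrow> 0" using conv x by blast
  show "(\<lambda>n. N s (x - P (\<lambda>i. g i x) n)) \<longlonglongrightarrow> 0" using cv0 unfolding PS_def .
  fix n
  have "N s x \<le> N s (P (\<lambda>i. g i x) n) + N s (x - P (\<lambda>i. g i x) n)" using x PSX by (intro Nrev[OF nrm])
  then show "N s x \<le> T s (\<lambda>i. g i x) + N s (x - P (\<lambda>i. g i x) n)"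
    using T_upper[OF g_Th[OF x], of n] by linarith
qed

lemma frame: "F_frame X N \<Theta> T g"
  unfolding F_frame_def
proof (intro conjI allI)
  fix i
  show "\<forall>x\<in>\<Inter>s. X s. \<forall>y\<in>\<Inter>s. X s. g i (x + y) = g i x + g i y"
  proof (intro ballI)
    fix x y assume "x \<in> (\<Inter>s. X s)" "y \<in> (\<Inter>s. X s)"
    then have "x \<in> X 0" "y \<in> X 0" by auto
    then show "g i (x + y) = g i x + g i y" by (rule g_add)
  qed
  show "\<forall>x\<in>\<Inter>s. X s. \<forall>c. g i (c *\<^sub>R x) = c * g i x"
  proof (intro ballI allI)
    fix x c assume "x \<in> (\<Inter>s. X s)"
    then have "x \<in> X 0" by auto
    then show "g i (c *\<^sub>R x) = c * g i x" by (rule g_scale)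
  qed
  obtain C where C: "\<forall>x\<in>X 0. \<bar>g i x\<bar> \<le> C * N 0 x" using g_bnd by blast
  have "\<forall>x\<in>\<Inter>s. X s. \<bar>g i x\<bar> \<le> C * N 0 x"
  proof
    fix x assume "x \<in> (\<Inter>s. X s)"
    then have "x \<in> X 0" by auto
    then show "\<bar>g i x\<bar> \<le> C * N 0 x" using C by (rule bspec[rotated])
  qed
  then show "\<exists>s C. \<forall>x\<in>\<Inter>s. X s. \<bar>g i x\<bar> \<le> C * N s x" by (intro exI[of _ 0] exI[of _ C])
next
  show "\<forall>f\<in>\<Inter>s. X s. (\<lambda>i. g i f) \<in> (\<Inter>s. \<Theta> s)"
  proof (intro ballI INT_I)
    fix x s assume "x \<in> (\<Inter>s. X s)"
    then have "x \<in> X s" by auto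
    then show "(\<lambda>i. g i x) \<in> \<Theta> s" by (rule g_Th)
  qed
next
  have "\<forall>s. \<exists>B. \<forall>n. \<forall>x\<in>X s. N s (P (\<lambda>i. g i x) n) \<le> B * N s x" using ubp_app by blast
  then have "\<exists>Bu. \<forall>s. \<forall>n. \<forall>x\<in>X s. N s (P (\<lambda>i. g i x) n) \<le> Bu s * N s x" by (rule choice)
  then obtain Bu where Bu0: "\<forall>s. \<forall>n. \<forall>x\<in>X s. N s (P (\<lambda>i. g i x) n) \<le> Bu s * N s x" ..
  have Bu: "N s (P (\<lambda>i. g i x) n) \<le> Bu s * N s x" if "x \<in> X s" for s n x using Bu0 that by blast
  have up: "T s (\<lambda>i. g i x) \<le> max 1 (Bu s) * N s x" if x: "x \<in> X s" for s x
  proof (rule T_least)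
    fix n
    have "N s (P (\<lambda>i. g i x) n) \<le> Bu s * N s x" using Bu[OF x] .
    also have "\<dots> \<le> max 1 (Bu s) * N s x" using Nnn[OF nrm x] by (intro mult_right_mono) auto
    finally show "N s (P (\<lambda>i. g i x) n) \<le> max 1 (Bu s) * N s x" .
  qed
  have AB: "0 < (1::real) \<and> 1 \<le> max 1 (Bu s) \<and>
        (\<forall>f\<in>\<Inter>s. X s. 1 * N s f \<le> T s (\<lambda>i. g i f) \<and> T s (\<lambda>i. g i f) \<le> max 1 (Bu s) * N s f)" for s
  proof (intro conjI ballI)
    fix x assume "x \<in> (\<Inter>s. X s)"
    then have x: "x \<in> X s" by blast
    show "1 * N s x \<le> T s (\<lambda>i. g i x)" using lower[OF x] by simp
    show "T s (\<lambda>i. g i x) \<le> max 1 (Bu s) * N s x" using up[OF x] .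
  qed simp_all
  show "\<exists>A B. \<forall>s. 0 < A s \<and> A s \<le> B s \<and>
        (\<forall>f\<in>\<Inter>s. X s. A s * N s f \<le> T s (\<lambda>i. g i f) \<and> T s (\<lambda>i. g i f) \<le> B s * N s f)"
    by (intro exI[of _ "\<lambda>s. 1"] exI[of _ "\<lambda>s. max 1 (Bu s)"] allI) (rule AB)
next
  show "\<exists>V. (\<forall>c\<in>\<Inter>s. \<Theta> s. V c \<in> (\<Inter>s. X s)) \<and>
        (\<forall>c\<in>\<Inter>s. \<Theta> s. \<forall>d\<in>\<Inter>s. \<Theta> s. V (\<lambda>j. c j + d j) = V c + V d) \<and>
        (\<forall>c\<in>\<Inter>s. \<Theta> s. \<forall>a. V (\<lambda>j. a * c j) = a *\<^sub>R V c) \<and>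
        (\<forall>f\<in>\<Inter>s. X s. V (\<lambda>i. g i f) = f) \<and>
        (\<forall>s. \<exists>K. \<forall>c\<in>\<Inter>s. \<Theta> s. N s (V c) \<le> K * T s c)"
  proof (intro exI[of _ "xl 0"] conjI ballI allI)
    fix c assume c: "c \<in> (\<Inter>s. \<Theta> s)"
    show "xl 0 c \<in> (\<Inter>s. X s)"
    proof
      fix s :: nat assume "s \<in> UNIV"
      have "c \<in> \<Theta> s" using c by blast
      then show "xl 0 c \<in> X s" using xl_shift[OF c, of s] xl(1) by simp
    qed
    fix a
    have c0: "c \<in> \<Theta> 0" using c by auto
    show "xl 0 (\<lambda>j. a * c j) = a *\<^sub>R xl 0 c" using c0 by (rule xl_scale)
  next
    fix c d assume c: "c \<in> (\<Inter>s. \<Theta> s)" and d: "d \<in> (\<Inter>s. \<Theta> s)"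
    have c0: "c \<in> \<Theta> 0" and d0: "d \<in> \<Theta> 0" using c d by auto
    show "xl 0 (\<lambda>j. c j + d j) = xl 0 c + xl 0 d" using c0 d0 by (rule xl_add)
  next
    fix x assume "x \<in> (\<Inter>s. X s)"
    then have "x \<in> X 0" by auto
    then show "xl 0 (\<lambda>i. g i x) = x" by (rule xl_g)
  next
    fix s
    have "N s (xl 0 c) \<le> 1 * T s c" if c: "c \<in> (\<Inter>s. \<Theta> s)" for c
    proof -
      have "c \<in> \<Theta> s" using c by blast
      then show ?thesis using xl_shift[OF c, of s] xl_bound by simp
    qed
    then show "\<exists>K. \<forall>c\<in>\<Inter>s. \<Theta> s. N s (xl 0 c) \<le> K * T s c" by blast
  qed
qed

lemma bessel: "DF_Bessel X N \<Theta> T f"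
  unfolding DF_Bessel_def dual_Bessel_def
proof (intro conjI allI exI[of _ "1::real"] impI)
  show "f i \<in> (\<Inter>s. X s)" for i using fF by blast
next
  fix s h assume h: "bdd_lin_fun (X s) (N s) h"
  have hadd: "x \<in> X s \<Longrightarrow> y \<in> X s \<Longrightarrow> h (x + y) = h x + h y" for x y using h unfolding bdd_lin_fun_def by blast
  have hsc: "x \<in> X s \<Longrightarrow> h (a *\<^sub>R x) = a * h x" for x a using h unfolding bdd_lin_fun_def by blast
  let ?D = "dual_norm (X s) (N s) h"
  have Dnn: "0 \<le> ?D" by (rule dual_nn[OF nrm h])
  have bd: "\<bar>h (xl s c)\<bar> \<le> ?D * T s c" if c: "c \<in> \<Theta> s" for c
  proof -
    have "\<bar>h (xl s c)\<bar> \<le> ?D * N s (xl s c)" using dual_le[OF nrm h xl(1)[OF c]] .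
    also have "\<dots> \<le> ?D * T s c" using xl_bound[OF c] Dnn by (intro mult_left_mono)
    finally show ?thesis .
  qed
  show "\<exists>\<phi>. bdd_lin_seq_fun (\<Theta> s) (T s) \<phi> \<and> (\<forall>i. \<phi> (unit_seq i) = h (f i)) \<and>
          dual_norm (\<Theta> s) (T s) \<phi> \<le> 1 * ?D"
  proof (intro exI[of _ "\<lambda>c. h (xl s c)"] conjI allI)
    show "bdd_lin_seq_fun (\<Theta> s) (T s) (\<lambda>c. h (xl s c))"
      unfolding bdd_lin_seq_fun_def
    proof (intro conjI ballI allI)
      fix c d assume c: "c \<in> \<Theta> s" and d: "d \<in> \<Theta> s"
      show "h (xl s (\<lambda>j. c j + d j)) = h (xl s c) + h (xl s d)"
        using xl_add[OF c d] hadd xl(1)[OF c] xl(1)[OF d] by simp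
    next
      fix c a assume c: "c \<in> \<Theta> s"
      show "h (xl s (\<lambda>j. a * c j)) = a * h (xl s c)" using xl_scale[OF c] hsc xl(1)[OF c] by simp
    next
      show "\<exists>C. \<forall>c\<in>\<Theta> s. \<bar>h (xl s c)\<bar> \<le> C * T s c" using bd by blast
    qed
    show "h (xl s (unit_seq i)) = h (f i)" for i by (simp add: xl_unit)
    show "dual_norm (\<Theta> s) (T s) (\<lambda>c. h (xl s c)) \<le> 1 * ?D"
      unfolding dual_norm_def[of "\<Theta> s" "T s"]
    proof (simp only: mult_1, rule cSUP_least)
      have "(\<lambda>j. 0) \<in> {x \<in> \<Theta> s. T s x \<le> 1}" using Th_zero[of s] T_zero[of s] by simp
      then show "{x \<in> \<Theta> s. T s x \<le> 1} \<noteq> {}" by blast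
      fix c assume "c \<in> {x \<in> \<Theta> s. T s x \<le> 1}"
      then have c: "c \<in> \<Theta> s" and T1: "T s c \<le> 1" by auto
      have "\<bar>h (xl s c)\<bar> \<le> ?D * T s c" by (rule bd[OF c])
      also have "\<dots> \<le> ?D * 1" using T1 Dnn by (intro mult_left_mono)
      finally show "\<bar>h (xl s c)\<bar> \<le> ?D" by simp
    qed
  qed
qed

end

theorem proposition4p1:
  fixes X :: "nat \<Rightarrow> 'a::real_vector set" and N :: "nat \<Rightarrow> 'a \<Rightarrow> real"
    and g :: "nat \<Rightarrow> 'a \<Rightarrow> real" and f :: "nat \<Rightarrow> 'a"
  assumes "F_seq X N"
    and "\<forall>i. bdd_lin_fun (X 0) (N 0) (g i)"
    and "\<forall>i. f i \<in> (\<Inter>s. X s) \<and> f i \<noteq> 0"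
    and "\<forall>s. \<forall>x\<in>X s. (\<lambda>n. N s (x - (\<Sum>i<n. g i x *\<^sub>R f i))) \<longlonglongrightarrow> 0"
  shows "\<exists>(\<Theta> :: nat \<Rightarrow> (nat \<Rightarrow> real) set) T.
           (\<forall>s. CB_space (\<Theta> s) (T s)) \<and>
           (\<Inter>s. \<Theta> s) \<noteq> {(\<lambda>j. 0)} \<and> (\<forall>s. \<Theta> (Suc s) \<subseteq> \<Theta> s) \<and>
           (\<forall>s. \<forall>c\<in>\<Theta> (Suc s). T s c \<le> T (Suc s) c) \<and>
           (\<forall>s. \<forall>c\<in>\<Theta> s. \<forall>e>0. \<exists>d\<in>(\<Inter>t. \<Theta> t). T s (\<lambda>j. c j - d j) < e) \<and>
           F_frame X N \<Theta> T g \<and> DF_Bessel X N \<Theta> T f"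
proof -
  interpret setting X N g f using assms by unfold_locales
  show ?thesis
  proof (intro exI[of _ "Th X N f"] exI[of _ "TT N f"] conjI allI ballI impI)
    show "CB_space (Th X N f s) (TT N f s)" for s by (rule CB)
    show "(\<Inter>s. Th X N f s) \<noteq> {(\<lambda>j. 0)}" by (rule ThF_nontriv)
    show "Th X N f (Suc s) \<subseteq> Th X N f s" for s by (rule Th_mono)
    show "TT N f s c \<le> TT N f (Suc s) c" if "c \<in> Th X N f (Suc s)" for s c using that by (rule T_mono)
    show "\<exists>d\<in>(\<Inter>t. Th X N f t). TT N f s (\<lambda>j. c j - d j) < e" if "c \<in> Th X N f s" "e > 0" for s c e
      using that by (rule dense)
    show "F_frame X N (Th X N f) (TT N f) g" by (rule frame)
    show "DF_Bessel X N (Th X N f) (TT N f) f" by (rule bessel)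
  qed
qed


end
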